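(* Let $X$ be a nonempty set, $Y$ a nonempty set, and $F\colon X^*\to Y$ a function. The following assertions are equivalent. (i) $F$ is unarily idempotizable, i.e., $\mathrm{ran}(F_1)=\mathrm{ran}(F^{\flat})$ and $F_1$ is one-to-one. (ii) $F_1$ is a bijection from $X$ onto $\mathrm{ran}(F^{\flat})$ and there is a unique unarily idempotent $\varepsilon$-standard operation $H\colon X^*\to X\cup\{\varepsilon\}$, namely the one with $H^{\flat}=F_1^{-1}\circ F^{\flat}$, such that $F^{\flat}=F_1\circ H^{\flat}$. (iii) There exist a unarily idempotent $\varepsilon$-standard operation $H\colon X^*\to X\cup\{\varepsilon\}$ and a bijection $f$ from $X$ onto $\mathrm{ran}(F^{\flat})$ such that $F^{\flat}=f\circ H^{\flat}$. Moreover, in case (iii) we necessarily have $f=F_1$ and $H^{\flat}=F_1^{-1}\circ F^{\flat}$.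
   Context: $X^*=\bigcup_{n\geqslant 0}X^n$ is the set of all finite tuples over $X$, where $X^0=\{\varepsilon\}$ and $\varepsilon$ is the empty tuple (assumed not to be an element of $X$). For $F\colon X^*\to Y$ and $n\geqslant 0$, $F_n=F|_{X^n}$ is the $n$-ary part of $F$ (with $X^1$ identified with $X$), and $F^{\flat}=F|_{X^*\setminus\{\varepsilon\}}$ is its non-nullary part. A function $F\colon X^*\to Y$ is standard if $F(\mathbf{x})=F(\varepsilon)$ holds only if $\mathbf{x}=\varepsilon$. A variadic operation on $X$ is a function $F\colon X^*\to X\cup\{\varepsilon\}$; it is $\varepsilon$-standard if it is standard and $F(\varepsilon)=\varepsilon$. An $\varepsilon$-standard operation $H$ is unarily idempotent if $H_1$ is the identity map of $X$. *)

theory Defs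
  imports Main
begin

text \<open>X is the type 'a, Y the type 'b (types are nonempty). X^* is 'a list,
 with [] the empty tuple epsilon. A variadic operation X^* -> X \<union> {epsilon}
 is a function 'a list => 'a option, None playing the role of epsilon.\<close>

definition standard :: "('a list \<Rightarrow> 'c) \<Rightarrow> bool" where
  "standard F \<longleftrightarrow> (\<forall>xs. F xs = F [] \<longrightarrow> xs = [])"

definition eps_standard :: "('a list \<Rightarrow> 'a option) \<Rightarrow> bool" where
  "eps_standard H \<longleftrightarrow> standard H \<and> H [] = None"

definition unarily_idempotent :: "('a list \<Rightarrow> 'a option) \<Rightarrow> bool" where
  "unarily_idempotent H \<longleftrightarrow> eps_standard H \<and> (\<forall>x. H [x] = Some x)"

definition ran_flat :: "('a list \<Rightarrow> 'b) \<Rightarrow> 'b set" where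
  "ran_flat F = F ` {xs. xs \<noteq> []}"

definition unarily_idempotizable :: "('a list \<Rightarrow> 'b) \<Rightarrow> bool" where
  "unarily_idempotizable F \<longleftrightarrow>
     range (\<lambda>x. F [x]) = ran_flat F \<and> inj (\<lambda>x. F [x])"

end

theory Submission
  imports Defs
begin

lemma idz_bij: "unarily_idempotizable F \<longleftrightarrow> bij_betw (\<lambda>x. F [x]) UNIV (ran_flat F)"
  unfolding unarily_idempotizable_def bij_betw_def by auto

lemma some_the: "eps_standard H \<Longrightarrow> xs \<noteq> [] \<Longrightarrow> H xs = Some (the (H xs))"
  unfolding eps_standard_def standard_def by (cases "H xs") auto

lemma uniq_part:
  assumes "unarily_idempotent H" "eps_standard H" "bij_betw f UNIV (ran_flat F)"
    "\<forall>xs. xs \<noteq> [] \<longrightarrow> F xs = f (the (H xs))"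
  shows "f = (\<lambda>x. F [x]) \<and> (\<forall>xs. xs \<noteq> [] \<longrightarrow> H xs = Some (the_inv (\<lambda>x. F [x]) (F xs)))"
proof -
  have f: "f = (\<lambda>x. F [x])"
  proof
    fix x show "f x = F [x]" using assms(1,4) unfolding unarily_idempotent_def
      by (metis list.distinct(1) option.sel)
  qed
  have inj: "inj f" using assms(3) bij_betw_def by blast
  show ?thesis
  proof (intro conjI f allI impI)
    fix xs :: "'a list" assume xs: "xs \<noteq> []"
    have "the_inv f (F xs) = the (H xs)" using assms(4) xs inj the_inv_f_f by metis
    have "H xs = Some (the (H xs))" by (rule some_the[OF assms(2) xs])
    also have "\<dots> = Some (the_inv f (F xs))" using \<open>the_inv f (F xs) = the (H xs)\<close> by simp
    also have "\<dots> = Some (the_inv (\<lambda>x. F [x]) (F xs))" using f by simp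
    finally show "H xs = Some (the_inv (\<lambda>x. F [x]) (F xs))" .
  qed
qed

lemma exist_part:
  assumes b: "bij_betw (\<lambda>x. F [x]) UNIV (ran_flat F)"
  defines "H \<equiv> (\<lambda>xs. if xs = [] then None else Some (the_inv (\<lambda>x. F [x]) (F xs)))"
  shows "unarily_idempotent H \<and> eps_standard H \<and>
                 (\<forall>xs. xs \<noteq> [] \<longrightarrow> F xs = F [the (H xs)])"
proof -
  have inj: "inj (\<lambda>x. F [x])" using b bij_betw_def by blast
  have es: "eps_standard H" unfolding eps_standard_def standard_def H_def by auto
  have "\<forall>x. H [x] = Some x" unfolding H_def using the_inv_f_f[OF inj] by simp
  moreover have "\<forall>xs. xs \<noteq> [] \<longrightarrow> F xs = F [the (H xs)]"
  proof (intro allI impI)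
    fix xs :: "'a list" assume xs: "xs \<noteq> []"
    have "F xs \<in> range (\<lambda>x. F [x])" using b xs unfolding bij_betw_def ran_flat_def by auto
    then have "F [the_inv (\<lambda>x. F [x]) (F xs)] = F xs" by (rule f_the_inv_into_f[OF inj])
    then show "F xs = F [the (H xs)]" using xs unfolding H_def by simp
  qed
  ultimately show ?thesis using es unfolding unarily_idempotent_def by blast
qed

theorem corollary2p3:
  fixes F :: "'a list \<Rightarrow> 'b"
  shows "(unarily_idempotizable F \<longleftrightarrow>
          (bij_betw (\<lambda>x. F [x]) UNIV (ran_flat F) \<and>
           (\<exists>!H. unarily_idempotent H \<and> eps_standard H \<and>
                 (\<forall>xs. xs \<noteq> [] \<longrightarrow> F xs = F [the (H xs)])) \<and>
           (\<forall>H. unarily_idempotent H \<and> eps_standard H \<and>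
                 (\<forall>xs. xs \<noteq> [] \<longrightarrow> F xs = F [the (H xs)]) \<longrightarrow>
                 (\<forall>xs. xs \<noteq> [] \<longrightarrow> H xs = Some (the_inv (\<lambda>x. F [x]) (F xs))))))
       \<and> (unarily_idempotizable F \<longleftrightarrow>
          (\<exists>H f. unarily_idempotent H \<and> eps_standard H \<and>
                 bij_betw f UNIV (ran_flat F) \<and>
                 (\<forall>xs. xs \<noteq> [] \<longrightarrow> F xs = f (the (H xs)))))
       \<and> (\<forall>H f. unarily_idempotent H \<and> eps_standard H \<and>
                 bij_betw f UNIV (ran_flat F) \<and>
                 (\<forall>xs. xs \<noteq> [] \<longrightarrow> F xs = f (the (H xs))) \<longrightarrow>
              f = (\<lambda>x. F [x]) \<and>
              (\<forall>xs. xs \<noteq> [] \<longrightarrow> H xs = Some (the_inv (\<lambda>x. F [x]) (F xs))))"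
proof -
  have P3: "\<forall>H f. unarily_idempotent H \<and> eps_standard H \<and>
                 bij_betw f UNIV (ran_flat F) \<and>
                 (\<forall>xs. xs \<noteq> [] \<longrightarrow> F xs = f (the (H xs))) \<longrightarrow>
              f = (\<lambda>x. F [x]) \<and>
              (\<forall>xs. xs \<noteq> [] \<longrightarrow> H xs = Some (the_inv (\<lambda>x. F [x]) (F xs)))"
    by (intro allI impI, elim conjE, rule uniq_part)
  have U: "bij_betw (\<lambda>x. F [x]) UNIV (ran_flat F) \<Longrightarrow> unarily_idempotent H \<and> eps_standard H \<and>
                 (\<forall>xs. xs \<noteq> [] \<longrightarrow> F xs = F [the (H xs)]) \<Longrightarrow>
                 (\<forall>xs. xs \<noteq> [] \<longrightarrow> H xs = Some (the_inv (\<lambda>x. F [x]) (F xs)))" for H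
    by (elim conjE, rule conjunct2[OF uniq_part[of H "\<lambda>x. F [x]" F]])
  have P1: "unarily_idempotizable F \<longleftrightarrow>
          (bij_betw (\<lambda>x. F [x]) UNIV (ran_flat F) \<and>
           (\<exists>!H. unarily_idempotent H \<and> eps_standard H \<and>
                 (\<forall>xs. xs \<noteq> [] \<longrightarrow> F xs = F [the (H xs)])) \<and>
           (\<forall>H. unarily_idempotent H \<and> eps_standard H \<and>
                 (\<forall>xs. xs \<noteq> [] \<longrightarrow> F xs = F [the (H xs)]) \<longrightarrow>
                 (\<forall>xs. xs \<noteq> [] \<longrightarrow> H xs = Some (the_inv (\<lambda>x. F [x]) (F xs)))))" (is "_ \<longleftrightarrow> ?rhs")
  proof
    assume a: "unarily_idempotizable F"
    then have b: "bij_betw (\<lambda>x. F [x]) UNIV (ran_flat F)" using idz_bij by blast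
    have uq: "\<And>H1 H2. unarily_idempotent H1 \<and> eps_standard H1 \<and>
                 (\<forall>xs. xs \<noteq> [] \<longrightarrow> F xs = F [the (H1 xs)]) \<Longrightarrow>
              unarily_idempotent H2 \<and> eps_standard H2 \<and>
                 (\<forall>xs. xs \<noteq> [] \<longrightarrow> F xs = F [the (H2 xs)]) \<Longrightarrow> H1 = H2"
    proof
      fix H1 H2 xs
      assume h1: "unarily_idempotent H1 \<and> eps_standard H1 \<and>
                 (\<forall>xs. xs \<noteq> [] \<longrightarrow> F xs = F [the (H1 xs)])"
        and h2: "unarily_idempotent H2 \<and> eps_standard H2 \<and>
                 (\<forall>xs. xs \<noteq> [] \<longrightarrow> F xs = F [the (H2 xs)])"
      show "H1 xs = H2 xs"
      proof (cases "xs = []")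
        case True
        have "H1 [] = None" "H2 [] = None" using h1 h2 unfolding eps_standard_def by blast+
        then show ?thesis using True by simp
      next
        case False then show ?thesis using U[OF b h1] U[OF b h2] by simp
      qed
    qed
    show "bij_betw (\<lambda>x. F [x]) UNIV (ran_flat F) \<and>
           (\<exists>!H. unarily_idempotent H \<and> eps_standard H \<and>
                 (\<forall>xs. xs \<noteq> [] \<longrightarrow> F xs = F [the (H xs)])) \<and>
           (\<forall>H. unarily_idempotent H \<and> eps_standard H \<and>
                 (\<forall>xs. xs \<noteq> [] \<longrightarrow> F xs = F [the (H xs)]) \<longrightarrow>
                 (\<forall>xs. xs \<noteq> [] \<longrightarrow> H xs = Some (the_inv (\<lambda>x. F [x]) (F xs))))"
    proof (intro conjI b allI impI)
      show "\<exists>!H. unarily_idempotent H \<and> eps_standard H \<and>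
                 (\<forall>xs. xs \<noteq> [] \<longrightarrow> F xs = F [the (H xs)])"
        by (rule ex1I, rule exist_part[OF b], rule uq, assumption, rule exist_part[OF b])
    next
      fix H and xs :: "'a list"
      assume "unarily_idempotent H \<and> eps_standard H \<and>
                 (\<forall>xs. xs \<noteq> [] \<longrightarrow> F xs = F [the (H xs)])" "xs \<noteq> []"
      then show "H xs = Some (the_inv (\<lambda>x. F [x]) (F xs))" using U[OF b] by blast
    qed
  next
    assume h: ?rhs
    then show "unarily_idempotizable F" using idz_bij by blast
  qed
  have P2: "unarily_idempotizable F \<longleftrightarrow>
          (\<exists>H f. unarily_idempotent H \<and> eps_standard H \<and>
                 bij_betw f UNIV (ran_flat F) \<and>
                 (\<forall>xs. xs \<noteq> [] \<longrightarrow> F xs = f (the (H xs))))"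
  proof
    assume "unarily_idempotizable F"
    then have b: "bij_betw (\<lambda>x. F [x]) UNIV (ran_flat F)" using idz_bij by blast
    show "\<exists>H f. unarily_idempotent H \<and> eps_standard H \<and>
                 bij_betw f UNIV (ran_flat F) \<and>
                 (\<forall>xs. xs \<noteq> [] \<longrightarrow> F xs = f (the (H xs)))"
    proof -
      obtain H where "unarily_idempotent H \<and> eps_standard H \<and>
                 (\<forall>xs. xs \<noteq> [] \<longrightarrow> F xs = F [the (H xs)])" using exist_part[OF b] by blast
      then show ?thesis using b by (intro exI[of _ H] exI[of _ "\<lambda>x. F [x]"]) blast
    qed
  next
    assume "\<exists>H f. unarily_idempotent H \<and> eps_standard H \<and>
                 bij_betw f UNIV (ran_flat F) \<and>
                 (\<forall>xs. xs \<noteq> [] \<longrightarrow> F xs = f (the (H xs)))"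
    then obtain H f where h: "unarily_idempotent H \<and> eps_standard H \<and>
                 bij_betw f UNIV (ran_flat F) \<and>
                 (\<forall>xs. xs \<noteq> [] \<longrightarrow> F xs = f (the (H xs)))" by blast
    then have "f = (\<lambda>x. F [x])" using uniq_part by (elim conjE) blast
    then show "unarily_idempotizable F" using h idz_bij by blast
  qed
  show ?thesis by (rule conjI[OF P1 conjI[OF P2 P3]])
qed

end
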